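(* Let $K=2L$ with $L\ge1$ an integer, let $N\ge1$ be divisible by $L$, put $M=N/L$, and let $\alpha\in[0,2]$. Let $\sigma$ be the mixed strategy of $\mathcal{B}_\alpha(N,K)$ that randomizes uniformly over the $M+1$ pure strategies $(j,\,M-j,\,j,\,M-j,\,\ldots,\,j,\,M-j)'$, $j=0,1,\ldots,M$. Then $\sigma$ is a symmetric equilibrium strategy of $\mathcal{B}_\alpha(N,K)$. (In particular, in $\mathcal{B}_\alpha(6,4)$, uniform randomization over $(0,3,0,3)',(1,2,1,2)',(2,1,2,1)',(3,0,3,0)'$ is a symmetric equilibrium strategy.)
   Context: Fix integers $N\ge1$, $K\ge2$ and a real number $\alpha$. The Colonel Blotto game $\mathcal{B}_\alpha(N,K)$ is the two-player simultaneous-move game with players $A,B$, each with pure strategy set $S=\{s\in\{0,1,\ldots,N\}^K:\sum_{k=1}^K s_k=N\}$, in which the payoff of player $i$ at the pure profile $(s^i,s^{-i})$ is $\pi^i(s^i,s^{-i})=\sum_{k=1}^K\big(\mathbf 1[s^i_k>s^{-i}_k]+\tfrac{\alpha}{2}\mathbf 1[s^i_k=s^{-i}_k]\big)$. Mixed strategies are probability distributions on $S$, with expected payoffs under independent randomization. A symmetric equilibrium strategy is a mixed strategy $\sigma$ such that $(\sigma,\sigma)$ is a Nash equilibrium. *)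

theory Defs
  imports "HOL-Probability.Probability"
begin

definition blotto_strategies :: "nat \<Rightarrow> nat \<Rightarrow> (nat \<Rightarrow> nat) set" where
  "blotto_strategies N K = {s. (\<forall>k\<ge>K. s k = 0) \<and> (\<forall>k<K. s k \<le> N) \<and> (\<Sum>k<K. s k) = N}"

definition blotto_payoff :: "real \<Rightarrow> nat \<Rightarrow> (nat \<Rightarrow> nat) \<Rightarrow> (nat \<Rightarrow> nat) \<Rightarrow> real" where
  "blotto_payoff \<alpha> K s t = (\<Sum>k<K. (if s k > t k then 1 else 0) + (\<alpha> / 2) * (if s k = t k then 1 else 0))"

definition blotto_mixed :: "nat \<Rightarrow> nat \<Rightarrow> (nat \<Rightarrow> nat) pmf \<Rightarrow> bool" where
  "blotto_mixed N K p \<longleftrightarrow> set_pmf p \<subseteq> blotto_strategies N K"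

definition blotto_exp_payoff :: "real \<Rightarrow> nat \<Rightarrow> (nat \<Rightarrow> nat) pmf \<Rightarrow> (nat \<Rightarrow> nat) pmf \<Rightarrow> real" where
  "blotto_exp_payoff \<alpha> K p q = measure_pmf.expectation (pair_pmf p q) (\<lambda>(s, t). blotto_payoff \<alpha> K s t)"

text \<open>(sigma, sigma) is a Nash equilibrium: since the game is symmetric, both players' conditions
  are the same: no mixed deviation against sigma does better than sigma.\<close>
definition blotto_sym_eq :: "real \<Rightarrow> nat \<Rightarrow> nat \<Rightarrow> (nat \<Rightarrow> nat) pmf \<Rightarrow> bool" where
  "blotto_sym_eq \<alpha> N K \<sigma> \<longleftrightarrow> blotto_mixed N K \<sigma> \<and>
     (\<forall>\<tau>. blotto_mixed N K \<tau> \<longrightarrow> blotto_exp_payoff \<alpha> K \<tau> \<sigma> \<le> blotto_exp_payoff \<alpha> K \<sigma> \<sigma>)"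

end

theory Submission imports Defs begin


lemma fub:
  fixes f :: "'a \<times> 'b \<Rightarrow> real" and p :: "'a pmf" and q :: "'b pmf"
  assumes nn: "\<And>x. 0 \<le> f x" and fin: "finite (set_pmf q)"
    and int: "integrable p (\<lambda>a. integral\<^sup>L q (\<lambda>b. f (a,b)))"
  shows "integral\<^sup>L (pair_pmf p q) f = integral\<^sup>L p (\<lambda>a. integral\<^sup>L q (\<lambda>b. f (a,b)))"
proof -
  have "integral\<^sup>L (pair_pmf p q) f = enn2real (\<integral>\<^sup>+ x. ennreal (f x) \<partial>pair_pmf p q)"
    by (rule integral_eq_nn_integral) (auto simp: nn)
  also have "(\<integral>\<^sup>+ x. ennreal (f x) \<partial>pair_pmf p q) = (\<integral>\<^sup>+a. \<integral>\<^sup>+b. ennreal (f (a, b)) \<partial>q \<partial>p)"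
    by (rule nn_integral_pair_pmf')
  also have "\<dots> = (\<integral>\<^sup>+a. ennreal (integral\<^sup>L q (\<lambda>b. f (a,b))) \<partial>p)"
    by (intro nn_integral_cong nn_integral_eq_integral integrable_measure_pmf_finite fin) (auto simp: nn)
  also have "\<dots> = ennreal (integral\<^sup>L p (\<lambda>a. integral\<^sup>L q (\<lambda>b. f (a,b))))"
    by (intro nn_integral_eq_integral int) (auto simp: nn)
  finally show ?thesis by (simp add: integral_nonneg nn)
qed



definition cf :: "real \<Rightarrow> nat \<Rightarrow> nat \<Rightarrow> real" where
  "cf \<alpha> M x = (\<Sum>j\<in>{0..M}. (if x > j then 1 else 0) + \<alpha>/2 * (if x = j then 1 else 0))"

lemma cf_split: "cf \<alpha> M x = real (card {j\<in>{0..M}. j < x}) + \<alpha>/2 * (if x \<le> M then 1 else 0)"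
proof -
  have 1: "(\<Sum>j\<in>{0..M}. (if x > j then 1 else 0::real)) = real (card {j\<in>{0..M}. j < x})"
    by (simp add: sum.If_cases Int_def)
  have 2: "(\<Sum>j\<in>{0..M}. \<alpha>/2 * (if x = j then 1 else 0::real)) = \<alpha>/2 * (if x \<le> M then 1 else 0)"
    by (subst sum_distrib_left[symmetric]) (simp add: if_distrib[where f="\<lambda>b. b = x"] cong: if_cong)
  show ?thesis unfolding cf_def sum.distrib 1 2 ..
qed

lemma cf_le: assumes "0 \<le> \<alpha>" shows "cf \<alpha> M x \<le> real x + \<alpha>/2"
proof -
  have "card {j\<in>{0..M}. j < x} \<le> card {..<x}" by (intro card_mono) auto
  then show ?thesis using assms by (simp add: cf_split)
qed

lemma cf_eq: assumes "x \<le> M" shows "cf \<alpha> M x = real x + \<alpha>/2"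
proof -
  have "{j\<in>{0..M}. j < x} = {..<x}" using assms by auto
  then show ?thesis using assms by (simp add: cf_split)
qed

lemma cf_rev: "(\<Sum>j\<in>{0..M}. (if x > M - j then 1 else 0) + \<alpha>/2 * (if x = M - j then 1 else 0)) = cf \<alpha> M x"
  unfolding cf_def by (subst sum.atLeastAtMost_rev) simp

lemma sum_alt: fixes L :: nat shows "j \<le> M \<Longrightarrow> (\<Sum>k<2*L. (if even k then j else M - j)) = L * M"
  by (induction L) auto


theorem mainTheorem11:
  fixes L N M :: nat and \<alpha> :: real
  assumes "L \<ge> 1" and "N \<ge> 1" and "L dvd N" and "M = N div L"
    and "0 \<le> \<alpha>" and "\<alpha> \<le> 2"
  shows "blotto_sym_eq \<alpha> N (2 * L)
           (pmf_of_set ((\<lambda>j. (\<lambda>k. if k < 2 * L then (if even k then j else M - j) else 0)) ` {0..M}))"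
proof -
  define s where "s = (\<lambda>j::nat. (\<lambda>k. if k < 2 * L then (if even k then j else M - j) else 0))"
  define A where "A = s ` {0..M}"
  define h where "h = (\<lambda>t::nat\<Rightarrow>nat. \<Sum>k<2*L. cf \<alpha> M (t k))"
  define V where "V = (real N + real L * \<alpha>) / real (M + 1)"
  have LM: "L * M = N" using assms(3,4) by simp
  have MN: "M \<le> N" using assms(1,4) by (simp add: div_le_dividend)
  have s0: "s j 0 = j" for j using assms(1) by (simp add: s_def)
  have inj: "inj_on s {0..M}" by (rule inj_onI) (metis s0)
  have finA: "finite A" and neA: "A \<noteq> {}" by (auto simp: A_def)
  have cardA: "card A = M + 1" using inj by (simp add: A_def card_image)
  have sstrat: "s j \<in> blotto_strategies N (2*L)" if "j \<le> M" for j
  proof -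
    have "(\<Sum>k<2*L. s j k) = (\<Sum>k<2*L. (if even k then j else M - j))"
      by (intro sum.cong) (auto simp: s_def)
    also have "\<dots> = N" using sum_alt[OF that, of L] LM by simp
    finally show ?thesis using that MN by (auto simp: blotto_strategies_def s_def)
  qed
  have Asub: "A \<subseteq> blotto_strategies N (2*L)" using sstrat by (auto simp: A_def)
  have cf_nn: "0 \<le> cf \<alpha> M x" for x unfolding cf_def using assms(5) by (intro sum_nonneg) auto
  have pay_nn: "0 \<le> blotto_payoff \<alpha> K a b" for K a b
    unfolding blotto_payoff_def using assms(5) by (intro sum_nonneg) auto
  have key: "(\<Sum>a\<in>A. blotto_payoff \<alpha> (2*L) t a) = h t" for t
  proof -
    have "(\<Sum>a\<in>A. blotto_payoff \<alpha> (2*L) t a) = (\<Sum>j\<in>{0..M}. blotto_payoff \<alpha> (2*L) t (s j))"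
      unfolding A_def using inj by (simp add: sum.reindex)
    also have "\<dots> = (\<Sum>k<2*L. \<Sum>j\<in>{0..M}. (if t k > s j k then 1 else 0) + (\<alpha> / 2) * (if t k = s j k then 1 else 0))"
      unfolding blotto_payoff_def by (rule sum.swap)
    also have "\<dots> = h t" unfolding h_def
    proof (intro sum.cong refl)
      fix k assume k: "k \<in> {..<2*L}"
      show "(\<Sum>j\<in>{0..M}. (if t k > s j k then 1 else 0) + (\<alpha> / 2) * (if t k = s j k then 1 else 0)) = cf \<alpha> M (t k)"
      proof (cases "even k")
        case True then show ?thesis using k by (simp add: s_def cf_def)
      next
        case False then show ?thesis using k cf_rev[of M "t k" \<alpha>] by (simp add: s_def)
      qed
    qed
    finally show ?thesis .
  qed
  have inner: "measure_pmf.expectation (pmf_of_set A) (\<lambda>b. blotto_payoff \<alpha> (2*L) t b) = h t / real (M+1)" for t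
    using finA neA by (simp add: integral_pmf_of_set key cardA)
  have hle: "h t \<le> real N + real L * \<alpha>" if "t \<in> blotto_strategies N (2*L)" for t
  proof -
    have "h t \<le> (\<Sum>k<2*L. real (t k) + \<alpha>/2)" unfolding h_def
      by (intro sum_mono cf_le assms(5))
    also have "\<dots> = real (\<Sum>k<2*L. t k) + real L * \<alpha>" by (simp add: sum.distrib)
    also have "(\<Sum>k<2*L. t k) = N" using that by (simp add: blotto_strategies_def)
    finally show ?thesis .
  qed
  have heq: "h a = real N + real L * \<alpha>" if aA: "a \<in> A" for a
  proof -
    obtain j where j: "j \<le> M" "a = s j" using aA by (auto simp: A_def)
    have "h a = (\<Sum>k<2*L. real (a k) + \<alpha>/2)" unfolding h_def
      by (intro sum.cong refl cf_eq) (auto simp: j s_def)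
    also have "\<dots> = real (\<Sum>k<2*L. a k) + real L * \<alpha>" by (simp add: sum.distrib)
    also have "(\<Sum>k<2*L. a k) = N" using sstrat[OF j(1)] j(2) by (simp add: blotto_strategies_def)
    finally show ?thesis .
  qed
  have ep: "blotto_exp_payoff \<alpha> (2*L) \<tau> (pmf_of_set A) = measure_pmf.expectation \<tau> (\<lambda>t. h t / real (M+1))"
    if "blotto_mixed N (2*L) \<tau>" for \<tau>
  proof -
    have int: "integrable \<tau> (\<lambda>t. h t / real (M+1))"
    proof (rule measure_pmf.integrable_const_bound[where B = V])
      show "AE x in measure_pmf \<tau>. norm (h x / real (M + 1)) \<le> V"
        using that hle unfolding blotto_mixed_def V_def
        by (auto simp: AE_measure_pmf_iff h_def cf_nn sum_nonneg divide_right_mono)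
    qed simp
    show ?thesis unfolding blotto_exp_payoff_def
      apply (subst fub)
      using int finA neA by (auto simp: pay_nn inner)
  qed
  have mixA: "blotto_mixed N (2*L) (pmf_of_set A)"
    using Asub finA neA by (simp add: blotto_mixed_def)
  have val: "blotto_exp_payoff \<alpha> (2*L) (pmf_of_set A) (pmf_of_set A) = V"
  proof -
    have "measure_pmf.expectation (pmf_of_set A) (\<lambda>t. h t / real (M+1)) = (\<Sum>a\<in>A. V) / real (card A)"
      using finA neA by (simp add: integral_pmf_of_set heq V_def)
    also have "\<dots> = V" using cardA by simp
    finally show ?thesis using ep[OF mixA] by simp
  qed
  have "blotto_exp_payoff \<alpha> (2*L) \<tau> (pmf_of_set A) \<le> V" if "blotto_mixed N (2*L) \<tau>" for \<tau>
  proof -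
    have int: "integrable \<tau> (\<lambda>t. h t / real (M+1))"
    proof (rule measure_pmf.integrable_const_bound[where B = V])
      show "AE x in measure_pmf \<tau>. norm (h x / real (M + 1)) \<le> V"
        using that hle unfolding blotto_mixed_def V_def
        by (auto simp: AE_measure_pmf_iff h_def cf_nn sum_nonneg divide_right_mono)
    qed simp
    have "measure_pmf.expectation \<tau> (\<lambda>t. h t / real (M+1)) \<le> V"
      using that hle int unfolding blotto_mixed_def V_def
      by (intro measure_pmf.integral_le_const) (auto simp: AE_measure_pmf_iff divide_right_mono)
    then show ?thesis using ep[OF that] by simp
  qed
  then show ?thesis using mixA val unfolding blotto_sym_eq_def A_def s_def by auto
qed

end
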